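(* Let $a,m\in\mathbb{Z}$ with $m\neq 0$, and let $s\ge 0$ and $m_s\ge 1$ be as defined in the context. Then $$a^{\varphi(m_s)+s}\equiv a^s \pmod{m}.$$
   Context: $\gcd$ denotes the greatest common divisor, always chosen positive, with the convention $\gcd(0,n)=n$ for $n>0$. $\varphi$ denotes Euler's totient function, and $a^0=1$. Since congruence modulo $m$ and modulo $-m$ coincide, the construction uses $|m|$. The sequences are defined as follows. - Put $d_0=\gcd(a,|m|)$ and $m_0=|m|/d_0$. - For $i\ge 1$, and only as long as $d_{i-1}\neq 1$, put $d_i=\gcd(d_{i-1},m_{i-1})$ and $m_i=m_{i-1}/d_i$. The index $s$ is the least index $i\ge 0$ with $d_i=1$, which exists. The number $m_s$ is the corresponding term of the sequence $(m_i)$. Equivalently, $s$ and $m_s$ are the output of the following algorithm: 1. Start with $A=a$, $M=|m|$, $i=0$. 2. Compute $d=\gcd(A,M)$ and $M'=M/d$. 3. If $d=1$, output $s=i$ and $m_s=M'$. Otherwise set $A=d$, $M=M'$, $i=i+1$, and repeat from step 2. *)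

theory Defs
  imports "HOL-Number_Theory.Number_Theory"
begin

text \<open>The sequences (d_i, m_i) of the paper, for given a and m (using |m|).
  They are defined for every index i; only the values up to the first index
  with d_i = 1 are relevant.\<close>
primrec dm_seq :: "int \<Rightarrow> int \<Rightarrow> nat \<Rightarrow> int \<times> int" where
  "dm_seq a m 0 = (gcd a \<bar>m\<bar>, \<bar>m\<bar> div gcd a \<bar>m\<bar>)"
| "dm_seq a m (Suc i) =
     (let d = fst (dm_seq a m i); mm = snd (dm_seq a m i); d' = gcd d mm
      in (d', mm div d'))"

definition d_seq :: "int \<Rightarrow> int \<Rightarrow> nat \<Rightarrow> int" where
  "d_seq a m i = fst (dm_seq a m i)"

definition m_seq :: "int \<Rightarrow> int \<Rightarrow> nat \<Rightarrow> int" where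
  "m_seq a m i = snd (dm_seq a m i)"

definition s_idx :: "int \<Rightarrow> int \<Rightarrow> nat" where
  "s_idx a m = (LEAST i. d_seq a m i = 1)"

end

theory Submission
  imports Defs
begin

lemma int_euler:
  fixes a n :: int
  assumes "coprime a n" "n > 0"
  shows "[a ^ totient (nat n) = 1] (mod n)"
proof (cases "n = 1")
  case True then show ?thesis by simp
next
  case False
  then have "residues n" using assms by (simp add: residues_def)
  then show ?thesis using residues.euler_theorem assms(1) by blast
qed

theorem mainTheorem5:
  fixes a m :: int
  assumes "m \<noteq> 0"
  shows "[a ^ (totient (nat (m_seq a m (s_idx a m))) + s_idx a m) = a ^ (s_idx a m)] (mod m)"
proof -
  define M where "M = \<bar>m\<bar>"
  define D where "D = d_seq a m"
  define Ms where "Ms = m_seq a m"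
  have M0: "M > 0" using assms M_def by simp
  have D0: "D 0 = gcd a M" and Ms0: "Ms 0 = M div D 0"
    by (simp_all add: D_def Ms_def M_def d_seq_def m_seq_def)
  have DS: "D (Suc i) = gcd (D i) (Ms i)" and MsS: "Ms (Suc i) = Ms i div D (Suc i)" for i
    by (simp_all add: D_def Ms_def d_seq_def m_seq_def Let_def)
  have pos: "Ms i > 0 \<and> D i > 0 \<and> D i dvd a \<and> M = (\<Prod>j\<le>i. D j) * Ms i" for i
  proof (induction i)
    case 0
    have "D 0 > 0" using D0 M0 by simp
    moreover have "D 0 dvd M" using D0 by simp
    moreover have "M = D 0 * Ms 0" using Ms0 \<open>D 0 dvd M\<close> by simp
    moreover have "Ms 0 > 0" using \<open>M = D 0 * Ms 0\<close> M0 \<open>D 0 > 0\<close> zero_less_mult_pos by metis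
    moreover have "D 0 dvd a" unfolding D0 by simp
    ultimately show ?case by simp
  next
    case (Suc i)
    have dp: "D (Suc i) > 0" using DS Suc by simp
    have dd: "D (Suc i) dvd Ms i" using DS by simp
    have "D (Suc i) dvd D i" using DS by simp
    then have "D (Suc i) dvd a" using Suc by (meson dvd_trans)
    moreover have e: "Ms i = D (Suc i) * Ms (Suc i)" using MsS dd by simp
    moreover have "Ms (Suc i) > 0" using e dp Suc zero_less_mult_pos by metis
    ultimately show ?case using Suc dp by (simp add: mult_ac)
  qed
  have pdvd: "(\<Prod>j<i. D j) dvd a ^ i" for i
  proof (induction i)
    case (Suc i)
    then show ?case using pos[of i] by (simp add: mult_dvd_mono mult.commute)
  qed simp
  have gdvd: "gcd a (Ms i) dvd D (Suc i)" for i
  proof (induction i)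
    case 0
    have "Ms 0 dvd M" using pos[of 0] by (metis dvd_triv_right)
    then have "gcd a (Ms 0) dvd M" by (rule dvd_trans[OF gcd_dvd2])
    then have "gcd a (Ms 0) dvd gcd a M" by (rule gcd_greatest[OF gcd_dvd1])
    then have "gcd a (Ms 0) dvd D 0" using D0 by simp
    then have "gcd a (Ms 0) dvd gcd (D 0) (Ms 0)" by (rule gcd_greatest[OF _ gcd_dvd2])
    then show ?case using DS[of 0] by simp
  next
    case (Suc i)
    have "D (Suc i) dvd Ms i" using DS by simp
    then have "Ms i = D (Suc i) * Ms (Suc i)" using MsS by simp
    then have "Ms (Suc i) dvd Ms i" by (metis dvd_triv_right)
    then have "gcd a (Ms (Suc i)) dvd gcd a (Ms i)" by (rule gcd_greatest[OF gcd_dvd1 dvd_trans[OF gcd_dvd2]])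
    then have "gcd a (Ms (Suc i)) dvd D (Suc i)" by (rule dvd_trans[OF _ Suc.IH])
    then have "gcd a (Ms (Suc i)) dvd gcd (D (Suc i)) (Ms (Suc i))" by (rule gcd_greatest[OF _ gcd_dvd2])
    then show ?case using DS[of "Suc i"] by simp
  qed
  have ex: "\<exists>i. D i = 1"
  proof (rule ccontr)
    assume "\<not> ?thesis"
    have ge: "D i \<ge> 2" for i
    proof -
      have "D i \<noteq> 1" using \<open>\<not> (\<exists>i. D i = 1)\<close> by blast
      moreover have "D i > 0" using pos[of i] by blast
      ultimately show ?thesis by linarith
    qed
    have "Ms i + int i \<le> Ms 0" for i
    proof (induction i)
      case (Suc i)
      have "Ms (Suc i) < Ms i" unfolding MsS
        using ge[of "Suc i"] pos[of i] by (simp add: int_div_less_self)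
      then show ?case using Suc by simp
    qed simp
    from this[of "nat (Ms 0)"] pos[of "nat (Ms 0)"] pos[of 0] show False by simp
  qed
  define s where "s = s_idx a m"
  have Ds: "D s = 1" unfolding s_def s_idx_def D_def using ex unfolding D_def by (rule LeastI_ex)
  have cop: "coprime a (Ms s)"
  proof -
    have "D (Suc s) = 1" using DS Ds by simp
    then have "gcd a (Ms s) dvd 1" using gdvd[of s] by simp
    then show ?thesis using is_unit_gcd by blast
  qed
  have Mfac: "M = (\<Prod>j<s. D j) * Ms s"
    using pos[of s] Ds by (simp add: lessThan_Suc_atMost[symmetric])
  have e: "Ms s dvd a ^ totient (nat (Ms s)) - 1"
    using int_euler[OF cop] pos[of s] by (simp add: cong_iff_dvd_diff)
  have "M dvd a ^ s * (a ^ totient (nat (Ms s)) - 1)"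
    unfolding Mfac by (rule mult_dvd_mono[OF pdvd e])
  then have "M dvd a ^ (totient (nat (Ms s)) + s) - a ^ s"
    by (simp add: algebra_simps power_add)
  then have "[a ^ (totient (nat (Ms s)) + s) = a ^ s] (mod M)"
    by (simp add: cong_iff_dvd_diff)
  then show ?thesis unfolding M_def Ms_def s_def by simp
qed

end
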